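(* Let $k_1,k_2$ be positive integers with $k_1\ge k_2\ge 2$, and let $D$ be a digraph that has a Hamiltonian directed path and contains no subdivision of $C(k_1,k_2)$ as a subdigraph. Then $\chi(D)\le 3k_1$.
   Context: Digraphs are orientations of finite simple graphs (no loops, no multiple arcs, no pair of opposite arcs). The chromatic number $\chi(D)$ of a digraph is the chromatic number of its underlying undirected graph. For positive integers $k_1,k_2$, the two-blocks cycle $C(k_1,k_2)$ is the oriented cycle formed by two internally disjoint directed paths from a vertex $x$ to a vertex $y$, of lengths $k_1$ and $k_2$. A subdivision of a digraph $H$ is a digraph obtained from $H$ by replacing each arc $(u,v)$ by a directed $uv$-path of length at least $1$ (internally disjoint new paths). A Hamiltonian directed path is a directed path passing through all vertices. *)

theory Defs
  imports Main
begin

definition digraph :: "'a set \<Rightarrow> ('a \<times> 'a) set \<Rightarrow> bool" where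
  "digraph V A \<longleftrightarrow> finite V \<and> A \<subseteq> V \<times> V \<and> (\<forall>v. (v, v) \<notin> A)
     \<and> (\<forall>u v. (u, v) \<in> A \<longrightarrow> (v, u) \<notin> A)"

text \<open>Directed path given by its vertex sequence: distinct vertices, consecutive
  vertices joined by arcs. Its length is the number of arcs, length ps - 1.\<close>

definition dpath :: "('a \<times> 'a) set \<Rightarrow> 'a list \<Rightarrow> bool" where
  "dpath A ps \<longleftrightarrow> ps \<noteq> [] \<and> distinct ps \<and> (\<forall>i. Suc i < length ps \<longrightarrow> (ps ! i, ps ! Suc i) \<in> A)"

definition path_arcs :: "'a list \<Rightarrow> ('a \<times> 'a) set" where
  "path_arcs ps = {(ps ! i, ps ! Suc i) | i. Suc i < length ps}"

definition hamiltonian_dpath :: "'a set \<Rightarrow> ('a \<times> 'a) set \<Rightarrow> 'a list \<Rightarrow> bool" where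
  "hamiltonian_dpath V A ps \<longleftrightarrow> dpath A ps \<and> set ps = V"

definition inner :: "'a list \<Rightarrow> 'a set" where
  "inner ps = set (butlast (tl ps))"

definition contains_subdivision ::
  "'a set \<Rightarrow> ('a \<times> 'a) set \<Rightarrow> 'b set \<Rightarrow> ('b \<times> 'b) set \<Rightarrow> bool" where
  "contains_subdivision V A HV HA \<longleftrightarrow>
     (\<exists>(f :: 'b \<Rightarrow> 'a) (P :: 'b \<times> 'b \<Rightarrow> 'a list).
        inj_on f HV \<and> f ` HV \<subseteq> V \<and>
        (\<forall>e \<in> HA. dpath A (P e) \<and> length (P e) \<ge> 2 \<and> set (P e) \<subseteq> V \<and>
                    hd (P e) = f (fst e) \<and> last (P e) = f (snd e)) \<and>
        (\<forall>e \<in> HA. inner (P e) \<inter> f ` HV = {}) \<and>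
        (\<forall>e \<in> HA. \<forall>e' \<in> HA. e \<noteq> e' \<longrightarrow> inner (P e) \<inter> set (P e') = {}))"

text \<open>The two-blocks cycle C(k1,k2) on vertex set {0..k1+k2-1}: x = 0, y = 1,
  first block 0 \<rightarrow> 2 \<rightarrow> 3 \<rightarrow> ... \<rightarrow> k1 \<rightarrow> 1 (length k1),
  second block 0 \<rightarrow> k1+1 \<rightarrow> ... \<rightarrow> k1+k2-1 \<rightarrow> 1 (length k2).\<close>

definition tb_block1 :: "nat \<Rightarrow> nat list" where
  "tb_block1 k1 = [0] @ [2..<k1 + 1] @ [1]"

definition tb_block2 :: "nat \<Rightarrow> nat \<Rightarrow> nat list" where
  "tb_block2 k1 k2 = [0] @ [k1 + 1..<k1 + k2] @ [1]"

definition two_blocks_V :: "nat \<Rightarrow> nat \<Rightarrow> nat set" where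
  "two_blocks_V k1 k2 = set (tb_block1 k1) \<union> set (tb_block2 k1 k2)"

definition two_blocks_A :: "nat \<Rightarrow> nat \<Rightarrow> (nat \<times> nat) set" where
  "two_blocks_A k1 k2 = path_arcs (tb_block1 k1) \<union> path_arcs (tb_block2 k1 k2)"

definition proper_colouring :: "'a set \<Rightarrow> ('a \<times> 'a) set \<Rightarrow> nat \<Rightarrow> ('a \<Rightarrow> nat) \<Rightarrow> bool" where
  "proper_colouring V A k c \<longleftrightarrow> c ` V \<subseteq> {..<k} \<and> (\<forall>(u, v) \<in> A. c u \<noteq> c v)"

definition chromatic_number :: "'a set \<Rightarrow> ('a \<times> 'a) set \<Rightarrow> nat" where
  "chromatic_number V A = (LEAST k. \<exists>c. proper_colouring V A k c)"

end

theory Submission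
  imports Defs
begin


definition seg :: "'a list \<Rightarrow> nat \<Rightarrow> nat \<Rightarrow> 'a list" where
  "seg Q i j = map (nth Q) [i..<Suc j]"

lemma seg_len: "length (seg Q i j) = Suc j - i" by (simp add: seg_def del: upt_Suc)

lemma seg_nth: "t < Suc j - i \<Longrightarrow> seg Q i j ! t = Q ! (i + t)"
  by (simp add: seg_def del: upt_Suc)

lemma seg_set: "set (seg Q i j) = nth Q ` {i..j}"
  by (auto simp: seg_def)

lemma seg_hd: "i \<le> j \<Longrightarrow> hd (seg Q i j) = Q ! i"
  by (simp add: seg_def upt_rec)

lemma seg_last: "i \<le> j \<Longrightarrow> last (seg Q i j) = Q ! j"
  by (simp add: seg_def)

lemma seg_inner: "i < j \<Longrightarrow> inner (seg Q i j) = nth Q ` {i<..<j}"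
proof -
  assume "i < j"
  have "tl [i..<Suc j] = [Suc i..<Suc j]" by (simp add: upt_rec del: upt_Suc)
  moreover have "butlast [Suc i..<Suc j] = [Suc i..<j]" using \<open>i<j\<close> by simp
  ultimately have "butlast (tl (seg Q i j)) = map (nth Q) [Suc i..<j]"
    unfolding seg_def by (metis map_butlast map_tl)
  then show ?thesis by (auto simp: inner_def)
qed

lemma seg_dpath:
  assumes "dpath A Q" "i < j" "j < length Q"
  shows "dpath A (seg Q i j)"
proof -
  have d: "distinct Q" using assms(1) by (simp add: dpath_def)
  have "distinct (seg Q i j)" unfolding seg_def
    using assms(3) by (auto simp: distinct_map intro!: inj_on_nth d)
  moreover have "(seg Q i j ! t, seg Q i j ! Suc t) \<in> A" if "Suc t < length (seg Q i j)" for t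
  proof -
    have "Suc (i + t) < length Q" using that assms by (simp add: seg_len)
    then have "(Q ! (i+t), Q ! Suc (i+t)) \<in> A" using assms(1) by (simp add: dpath_def)
    then show ?thesis using that by (simp add: seg_len seg_nth)
  qed
  moreover have "seg Q i j \<noteq> []" using assms(2) by (simp add: seg_def)
  ultimately show ?thesis by (simp add: dpath_def)
qed

lemma b1_len: "length (tb_block1 k1) = Suc k1" if "k1 \<ge> 1" using that by (auto simp: tb_block1_def)
lemma b2_len: "length (tb_block2 k1 k2) = Suc k2" if "k2 \<ge> 1" using that by (simp add: tb_block2_def)

lemma b1_nth: assumes "k1 \<ge> 1" "i \<le> k1"
  shows "tb_block1 k1 ! i = (if i = 0 then 0 else if i < k1 then Suc i else 1)"
  using assms by (auto simp: tb_block1_def nth_append nth_Cons split: nat.splits)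

lemma b2_nth: assumes "k2 \<ge> 1" "i \<le> k2"
  shows "tb_block2 k1 k2 ! i = (if i = 0 then 0 else if i < k2 then k1 + i else 1)"
  using assms by (auto simp: tb_block2_def nth_append nth_Cons split: nat.splits)

lemma Imono: assumes "k < (n::nat)" "i < j" "j \<le> k"
  shows "(if i = k then n - 1 else i) < (if j = k then n - 1 else j)"
  using assms by auto

lemma Imono': assumes "k < (n::nat)" "i \<le> j" "j \<le> k"
  shows "(if i = k then n - 1 else i) \<le> (if j = k then n - 1 else j)"
  using assms by auto

lemma Ibound: assumes "k < (n::nat)" "i \<le> k"
  shows "(if i = k then n - 1 else i) < n" using assms by auto

lemma b12_arcs_disj:
  assumes "2 \<le> k1" "2 \<le> k2" "i < k1" "j < k2"
  shows "(tb_block1 k1 ! i, tb_block1 k1 ! Suc i) \<noteq> (tb_block2 k1 k2 ! j, tb_block2 k1 k2 ! Suc j)"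
  using assms by (auto simp: b1_nth b2_nth)

lemma path_arcs_nth: "path_arcs B = (\<lambda>i. (B ! i, B ! Suc i)) ` {i. Suc i < length B}"
  by (auto simp: path_arcs_def)

lemma HA_char: assumes "2 \<le> k1" "2 \<le> k2"
  shows "two_blocks_A k1 k2 = (\<lambda>i. (tb_block1 k1 ! i, tb_block1 k1 ! Suc i)) ` {..<k1}
     \<union> (\<lambda>i. (tb_block2 k1 k2 ! i, tb_block2 k1 k2 ! Suc i)) ` {..<k2}"
  using assms unfolding two_blocks_A_def path_arcs_nth by (auto simp: b1_len b2_len)

lemma HV_char: assumes "2 \<le> k1" "2 \<le> k2"
  shows "two_blocks_V k1 k2 = (\<lambda>i. tb_block1 k1 ! i) ` {..k1}
     \<union> (\<lambda>i. tb_block2 k1 k2 ! i) ` {..k2}"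
proof -
  have "set (tb_block1 k1) = (\<lambda>i. tb_block1 k1 ! i) ` {..k1}"
    using assms by (auto simp: set_conv_nth b1_len)
  moreover have "set (tb_block2 k1 k2) = (\<lambda>i. tb_block2 k1 k2 ! i) ` {..k2}"
    using assms by (auto simp: set_conv_nth b2_len)
  ultimately show ?thesis by (simp add: two_blocks_V_def)
qed




lemma two_paths_subdiv:
  fixes Q1 Q2 :: "'a list" and k1 k2 :: nat
  assumes p1: "dpath A Q1" and p2: "dpath A Q2"
    and s1: "set Q1 \<subseteq> V" and s2: "set Q2 \<subseteq> V"
    and h: "hd Q1 = hd Q2" and l: "last Q1 = last Q2"
    and len1: "k1 < length Q1" and len2: "k2 < length Q2"
    and k1: "2 \<le> k1" and k2: "2 \<le> k2"
    and dis1: "\<And>i j. 0 < i \<Longrightarrow> i < length Q1 - 1 \<Longrightarrow> j < length Q2 \<Longrightarrow> Q1!i \<noteq> Q2!j"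
    and dis2: "\<And>i j. i < length Q1 \<Longrightarrow> 0 < j \<Longrightarrow> j < length Q2 - 1 \<Longrightarrow> Q1!i \<noteq> Q2!j"
  shows "contains_subdivision V A (two_blocks_V k1 k2) (two_blocks_A k1 k2)"
proof -
  define n1 where "n1 = length Q1"
  define n2 where "n2 = length Q2"
  define B1 where "B1 = tb_block1 k1"
  define B2 where "B2 = tb_block2 k1 k2"
  define I1 where "I1 i = (if i = k1 then n1 - 1 else i)" for i
  define I2 where "I2 i = (if i = k2 then n2 - 1 else i)" for i
  define f where "f m = (if m = 0 then Q1!0 else if m = 1 then Q1!(n1-1) else if m \<le> k1 then Q1!(m-1) else Q2!(m-k1))" for m
  define x1 where "x1 m = (if m = 0 then 0 else m - 1)" for m :: nat
  define x2 where "x2 m = (if m = 0 then 0 else m - k1)" for m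
  define P where "P e = (if e \<in> path_arcs B1 then seg Q1 (I1 (x1 (fst e))) (I1 (Suc (x1 (fst e))))
      else seg Q2 (I2 (x2 (fst e))) (I2 (Suc (x2 (fst e)))))" for e
  have d1: "distinct Q1" using p1 by (simp add: dpath_def)
  have d2: "distinct Q2" using p2 by (simp add: dpath_def)
  have ne1: "Q1 \<noteq> []" and ne2: "Q2 \<noteq> []" using len1 len2 by auto
  have k1n: "k1 < n1" and k2n: "k2 < n2" using len1 len2 n1_def n2_def by auto
  have I1m: "I1 i < I1 j" if "i < j" "j \<le> k1" for i j
    unfolding I1_def using Imono[OF k1n that] .
  have I1m': "I1 i \<le> I1 j" if "i \<le> j" "j \<le> k1" for i j
    unfolding I1_def using Imono'[OF k1n that] .
  have I1b: "I1 i < n1" if "i \<le> k1" for i unfolding I1_def using Ibound[OF k1n that] .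
  have I2m: "I2 i < I2 j" if "i < j" "j \<le> k2" for i j
    unfolding I2_def using Imono[OF k2n that] .
  have I2m': "I2 i \<le> I2 j" if "i \<le> j" "j \<le> k2" for i j
    unfolding I2_def using Imono'[OF k2n that] .
  have I2b: "I2 i < n2" if "i \<le> k2" for i unfolding I2_def using Ibound[OF k2n that] .
  have I1k: "I1 k1 = n1 - 1" "I2 k2 = n2 - 1" by (auto simp: I1_def I2_def)
  have I10: "I1 0 = 0" "I2 0 = 0" using k1 k2 by (auto simp: I1_def I2_def)
  have F1: "f (B1 ! i) = Q1 ! I1 i" if "i \<le> k1" for i
    using that k1 by (auto simp: B1_def b1_nth f_def I1_def)
  have F2: "f (B2 ! i) = Q2 ! I2 i" if "i \<le> k2" for i
  proof -
    have "hd Q1 = Q1 ! 0" "hd Q2 = Q2 ! 0" using ne1 ne2 by (auto simp: hd_conv_nth)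
    moreover have "last Q1 = Q1 ! (n1 - 1)" "last Q2 = Q2 ! (n2 - 1)"
      using ne1 ne2 by (auto simp: last_conv_nth n1_def n2_def)
    ultimately show ?thesis
      using that k1 k2 h l by (auto simp: B2_def b2_nth f_def I2_def)
  qed
  have X1: "x1 (B1 ! i) = i" if "i < k1" for i using that by (auto simp: B1_def b1_nth x1_def)
  have X2: "x2 (B2 ! i) = i" if "i < k2" for i using that by (auto simp: B2_def b2_nth x2_def)
  have PA1: "P (B1 ! i, B1 ! Suc i) = seg Q1 (I1 i) (I1 (Suc i))" if "i < k1" for i
  proof -
    have "(B1 ! i, B1 ! Suc i) \<in> path_arcs B1"
      using that k1 by (auto simp: path_arcs_def B1_def b1_len)
    then show ?thesis using that by (simp add: P_def X1)
  qed
  have PA2: "P (B2 ! i, B2 ! Suc i) = seg Q2 (I2 i) (I2 (Suc i))" if "i < k2" for i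
  proof -
    have "(B2 ! i, B2 ! Suc i) \<notin> path_arcs B1"
    proof
      assume "(B2 ! i, B2 ! Suc i) \<in> path_arcs B1"
      then obtain j where "Suc j < length B1" "(B2 ! i, B2 ! Suc i) = (B1 ! j, B1 ! Suc j)"
        unfolding path_arcs_def by auto
      moreover have "j < k1" using calculation(1) k1 by (simp add: B1_def b1_len)
      ultimately show False using b12_arcs_disj[OF k1 k2 _ that] B1_def B2_def by metis
    qed
    then show ?thesis using that by (simp add: P_def X2)
  qed
  have HA: "two_blocks_A k1 k2 = (\<lambda>i. (B1 ! i, B1 ! Suc i)) ` {..<k1} \<union> (\<lambda>i. (B2 ! i, B2 ! Suc i)) ` {..<k2}"
    using HA_char[OF k1 k2] B1_def B2_def by simp
  have HV: "two_blocks_V k1 k2 = (\<lambda>i. B1 ! i) ` {..k1} \<union> (\<lambda>i. B2 ! i) ` {..k2}"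
    using HV_char[OF k1 k2] B1_def B2_def by simp
  have fHV: "f ` two_blocks_V k1 k2 = (\<lambda>i. Q1 ! I1 i) ` {..k1} \<union> (\<lambda>i. Q2 ! I2 i) ` {..k2}"
    unfolding HV image_Un image_image using F1 F2 by auto
  have eq1: "i = j" if "i \<le> k1" "j \<le> k1" "Q1 ! I1 i = Q1 ! I1 j" for i j
  proof -
    have "I1 i = I1 j" using that I1b d1 by (simp add: nth_eq_iff_index_eq n1_def)
    then show ?thesis using I1m that by (metis linorder_neqE_nat less_irrefl)
  qed
  have eq2: "i = j" if "i \<le> k2" "j \<le> k2" "Q2 ! I2 i = Q2 ! I2 j" for i j
  proof -
    have "I2 i = I2 j" using that I2b d2 by (simp add: nth_eq_iff_index_eq n2_def)
    then show ?thesis using I2m that by (metis linorder_neqE_nat less_irrefl)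
  qed
  have B0: "B2 ! 0 = B1 ! 0" and Bk: "B2 ! k2 = B1 ! k1"
    using k1 k2 by (auto simp: B1_def B2_def b1_nth b2_nth)
  have eq12: "B1 ! i = B2 ! j" if "i \<le> k1" "j \<le> k2" "Q1 ! I1 i = Q2 ! I2 j" for i j
  proof -
    consider "j = 0" | "j = k2" | "0 < j" "j < k2" using \<open>j \<le> k2\<close> by (cases "j=0"; cases "j=k2"; auto)
    then show ?thesis
    proof cases
      case 1
      then have "Q1 ! I1 i = Q1 ! I1 0" using that F1[of 0] F2[of 0] B0 by simp
      then have "i = 0" using eq1 that by simp
      then show ?thesis using 1 B0 by simp
    next
      case 2
      then have "Q1 ! I1 i = Q1 ! I1 k1" using that F1[of k1] F2[of k2] Bk by simp
      then have "i = k1" using eq1 that by simp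
      then show ?thesis using 2 Bk by simp
    next
      case 3
      then have "I2 j = j" by (simp add: I2_def)
      moreover have "I1 i < length Q1" using I1b that n1_def by simp
      ultimately have "Q1 ! I1 i \<noteq> Q2 ! I2 j" using dis2 3 k2n n2_def by simp
      then show ?thesis using that by simp
    qed
  qed
  have inj: "inj_on f (two_blocks_V k1 k2)"
  proof (rule inj_onI)
    fix u v assume u: "u \<in> two_blocks_V k1 k2" and v: "v \<in> two_blocks_V k1 k2" and fe: "f u = f v"
    from u v show "u = v" unfolding HV
    proof (elim UnE imageE)
      fix i j assume "u = B1 ! i" "i \<in> {..k1}" "v = B1 ! j" "j \<in> {..k1}"
      then show ?thesis using fe F1 eq1 by auto
    next
      fix i j assume "u = B1 ! i" "i \<in> {..k1}" "v = B2 ! j" "j \<in> {..k2}"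
      then show ?thesis using fe F1 F2 eq12 by auto
    next
      fix i j assume "u = B2 ! i" "i \<in> {..k2}" "v = B1 ! j" "j \<in> {..k1}"
      then show ?thesis using fe F1 F2 eq12 by (metis atMost_iff)
    next
      fix i j assume "u = B2 ! i" "i \<in> {..k2}" "v = B2 ! j" "j \<in> {..k2}"
      then show ?thesis using fe F2 eq2 by auto
    qed
  qed
  have fV: "f ` two_blocks_V k1 k2 \<subseteq> V"
    unfolding fHV using s1 s2 I1b I2b n1_def n2_def by (auto intro!: nth_mem[THEN subsetD[rotated]])
  have T1: "Q1 ! t \<noteq> Q1 ! I1 j" if "i < k1" "j \<le> k1" "I1 i < t" "t < I1 (Suc i)" for i j t
  proof
    assume "Q1 ! t = Q1 ! I1 j"
    moreover have "t < n1" using that I1b[of "Suc i"] by simp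
    ultimately have "t = I1 j" using I1b[OF that(2)] d1 by (simp add: nth_eq_iff_index_eq n1_def)
    then show False using that I1m'[of j i] I1m'[of "Suc i" j] by (cases "j \<le> i") auto
  qed
  have T2: "Q2 ! t \<noteq> Q2 ! I2 j" if "i < k2" "j \<le> k2" "I2 i < t" "t < I2 (Suc i)" for i j t
  proof
    assume "Q2 ! t = Q2 ! I2 j"
    moreover have "t < n2" using that I2b[of "Suc i"] by simp
    ultimately have "t = I2 j" using I2b[OF that(2)] d2 by (simp add: nth_eq_iff_index_eq n2_def)
    then show False using that I2m'[of j i] I2m'[of "Suc i" j] by (cases "j \<le> i") auto
  qed
  have D11: "Q1 ! t \<noteq> Q1 ! t'" if "i < k1" "i' < k1" "i \<noteq> i'" "I1 i < t" "t < I1 (Suc i)"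
     "I1 i' \<le> t'" "t' \<le> I1 (Suc i')" for i i' t t'
  proof
    assume "Q1 ! t = Q1 ! t'"
    moreover have "t < n1" using that I1b[of "Suc i"] by simp
    moreover have "t' < n1" using that I1b[of "Suc i'"] by simp
    ultimately have "t = t'" using d1 by (simp add: nth_eq_iff_index_eq n1_def)
    then show False using that I1m'[of "Suc i'" i] I1m'[of "Suc i" i'] by (cases "i' < i") auto
  qed
  have D22: "Q2 ! t \<noteq> Q2 ! t'" if "i < k2" "i' < k2" "i \<noteq> i'" "I2 i < t" "t < I2 (Suc i)"
     "I2 i' \<le> t'" "t' \<le> I2 (Suc i')" for i i' t t'
  proof
    assume "Q2 ! t = Q2 ! t'"
    moreover have "t < n2" using that I2b[of "Suc i"] by simp
    moreover have "t' < n2" using that I2b[of "Suc i'"] by simp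
    ultimately have "t = t'" using d2 by (simp add: nth_eq_iff_index_eq n2_def)
    then show False using that I2m'[of "Suc i'" i] I2m'[of "Suc i" i'] by (cases "i' < i") auto
  qed
  have D12: "Q1 ! t \<noteq> Q2 ! t'" if "i < k1" "I1 i < t" "t < I1 (Suc i)" "t' < n2" for i t t'
  proof -
    have "I1 (Suc i) \<le> I1 k1" using I1m' that by simp
    then have "t < length Q1 - 1" using that I1k n1_def by simp
    then show ?thesis using dis1[of t t'] that n2_def by simp
  qed
  have D21: "Q2 ! t \<noteq> Q1 ! t'" if "i < k2" "I2 i < t" "t < I2 (Suc i)" "t' < n1" for i t t'
  proof -
    have "I2 (Suc i) \<le> I2 k2" using I2m' that by simp
    then have "t < length Q2 - 1" using that I1k n2_def by simp
    then show ?thesis using dis2[of t' t] that n1_def by auto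
  qed
  have SG1: "I1 i < I1 (Suc i)" "I1 (Suc i) < length Q1" if "i < k1" for i
    using I1m I1b that n1_def by auto
  have SG2: "I2 i < I2 (Suc i)" "I2 (Suc i) < length Q2" if "i < k2" for i
    using I2m I2b that n2_def by auto
  have C1: "dpath A (P e) \<and> 2 \<le> length (P e) \<and> set (P e) \<subseteq> V \<and> hd (P e) = f (fst e) \<and> last (P e) = f (snd e)"
    if "e \<in> two_blocks_A k1 k2" for e
    using that unfolding HA
  proof (elim UnE imageE)
    fix i assume e: "e = (B1!i, B1!Suc i)" "i \<in> {..<k1}"
    then have i: "i < k1" by simp
    have "set (seg Q1 (I1 i) (I1 (Suc i))) \<subseteq> V" using s1 SG1[OF i] unfolding seg_set by auto
    then show ?thesis unfolding e(1) fst_conv snd_conv PA1[OF i]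
      using seg_dpath[OF p1 SG1[OF i]] SG1[OF i] F1 i by (simp add: seg_len seg_hd seg_last)
  next
    fix i assume e: "e = (B2!i, B2!Suc i)" "i \<in> {..<k2}"
    then have i: "i < k2" by simp
    have "set (seg Q2 (I2 i) (I2 (Suc i))) \<subseteq> V" using s2 SG2[OF i] unfolding seg_set by auto
    then show ?thesis unfolding e(1) fst_conv snd_conv PA2[OF i]
      using seg_dpath[OF p2 SG2[OF i]] SG2[OF i] F2 i by (simp add: seg_len seg_hd seg_last)
  qed
  have C2: "inner (P e) \<inter> f ` two_blocks_V k1 k2 = {}" if "e \<in> two_blocks_A k1 k2" for e
    using that unfolding HA
  proof (elim UnE imageE)
    fix i assume e: "e = (B1!i, B1!Suc i)" "i \<in> {..<k1}"
    then have i: "i < k1" by simp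
    show ?thesis unfolding e(1) PA1[OF i] seg_inner[OF SG1(1)[OF i]] fHV
    proof (intro equals0I)
      fix z assume "z \<in> (!) Q1 ` {I1 i<..<I1 (Suc i)} \<inter> ((\<lambda>i. Q1 ! I1 i) ` {..k1} \<union> (\<lambda>i. Q2 ! I2 i) ` {..k2})"
      then obtain t where t: "I1 i < t" "t < I1 (Suc i)" "z = Q1 ! t"
        and "z \<in> (\<lambda>i. Q1 ! I1 i) ` {..k1} \<union> (\<lambda>i. Q2 ! I2 i) ` {..k2}" by auto
      then show False
      proof (elim UnE imageE)
        fix j assume "z = Q1 ! I1 j" "j \<in> {..k1}" then show False using T1[OF i, of j t] t by auto
      next
        fix j assume z: "z = Q2 ! I2 j" "j \<in> {..k2}"
        then have "I2 j < n2" using I2b by simp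
        from D12[OF i t(1,2) this] show False using z(1) t(3) by metis
      qed
    qed
  next
    fix i assume e: "e = (B2!i, B2!Suc i)" "i \<in> {..<k2}"
    then have i: "i < k2" by simp
    show ?thesis unfolding e(1) PA2[OF i] seg_inner[OF SG2(1)[OF i]] fHV
    proof (intro equals0I)
      fix z assume "z \<in> (!) Q2 ` {I2 i<..<I2 (Suc i)} \<inter> ((\<lambda>i. Q1 ! I1 i) ` {..k1} \<union> (\<lambda>i. Q2 ! I2 i) ` {..k2})"
      then obtain t where t: "I2 i < t" "t < I2 (Suc i)" "z = Q2 ! t"
        and "z \<in> (\<lambda>i. Q1 ! I1 i) ` {..k1} \<union> (\<lambda>i. Q2 ! I2 i) ` {..k2}" by auto
      then show False
      proof (elim UnE imageE)
        fix j assume z: "z = Q1 ! I1 j" "j \<in> {..k1}"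
        then have "I1 j < n1" using I1b by simp
        from D21[OF i t(1,2) this] show False using z(1) t(3) by metis
      next
        fix j assume "z = Q2 ! I2 j" "j \<in> {..k2}" then show False using T2[OF i, of j t] t by auto
      qed
    qed
  qed
  have C3: "inner (P e) \<inter> set (P e') = {}" if "e \<in> two_blocks_A k1 k2" "e' \<in> two_blocks_A k1 k2" "e \<noteq> e'" for e e'
    using that(1,2) unfolding HA
  proof (elim UnE imageE)
    fix i i' assume e: "e = (B1!i, B1!Suc i)" "i \<in> {..<k1}" and e': "e' = (B1!i', B1!Suc i')" "i' \<in> {..<k1}"
    then have i: "i < k1" "i' < k1" "i \<noteq> i'" using that(3) by auto
    show ?thesis unfolding e(1) e'(1) PA1[OF i(1)] PA1[OF i(2)] seg_inner[OF SG1(1)[OF i(1)]] seg_set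
      using D11[OF i] by (auto simp: disjoint_iff)
  next
    fix i i' assume e: "e = (B1!i, B1!Suc i)" "i \<in> {..<k1}" and e': "e' = (B2!i', B2!Suc i')" "i' \<in> {..<k2}"
    then have i: "i < k1" "i' < k2" by auto
    show ?thesis unfolding e(1) e'(1) PA1[OF i(1)] PA2[OF i(2)] seg_inner[OF SG1(1)[OF i(1)]] seg_set
      using D12[OF i(1)] SG2[OF i(2)] n2_def by (auto simp: disjoint_iff)
  next
    fix i i' assume e: "e = (B2!i, B2!Suc i)" "i \<in> {..<k2}" and e': "e' = (B1!i', B1!Suc i')" "i' \<in> {..<k1}"
    then have i: "i < k2" "i' < k1" by auto
    show ?thesis unfolding e(1) e'(1) PA2[OF i(1)] PA1[OF i(2)] seg_inner[OF SG2(1)[OF i(1)]] seg_set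
      using D21[OF i(1)] SG1[OF i(2)] n1_def by (auto simp: disjoint_iff)
  next
    fix i i' assume e: "e = (B2!i, B2!Suc i)" "i \<in> {..<k2}" and e': "e' = (B2!i', B2!Suc i')" "i' \<in> {..<k2}"
    then have i: "i < k2" "i' < k2" "i \<noteq> i'" using that(3) by auto
    show ?thesis unfolding e(1) e'(1) PA2[OF i(1)] PA2[OF i(2)] seg_inner[OF SG2(1)[OF i(1)]] seg_set
      using D22[OF i] by (auto simp: disjoint_iff)
  qed
  have C1': "\<forall>e\<in>two_blocks_A k1 k2. dpath A (P e) \<and> 2 \<le> length (P e) \<and> set (P e) \<subseteq> V \<and> hd (P e) = f (fst e) \<and> last (P e) = f (snd e)"
    using C1 by blast
  have C2': "\<forall>e\<in>two_blocks_A k1 k2. inner (P e) \<inter> f ` two_blocks_V k1 k2 = {}" using C2 by blast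
  have C3': "\<forall>e\<in>two_blocks_A k1 k2. \<forall>e'\<in>two_blocks_A k1 k2. e \<noteq> e' \<longrightarrow> inner (P e) \<inter> set (P e') = {}"
    using C3 by blast
  show ?thesis unfolding contains_subdivision_def
    apply (rule exI[of _ f], rule exI[of _ P])
    using inj fV C1' C2' C3' by (intro conjI)
qed




lemma nth_inner: assumes "0 < i" "i < length xs - 1" shows "xs ! i \<in> inner xs"
proof -
  have "butlast (tl xs) ! (i - 1) = xs ! i" using assms by (simp add: nth_butlast nth_tl)
  moreover have "i - 1 < length (butlast (tl xs))" using assms by simp
  ultimately show ?thesis unfolding inner_def by (metis nth_mem)
qed

lemma two_paths_subdiv':
  fixes Q1 Q2 :: "'a list" and k1 k2 :: nat
  assumes p1: "dpath A Q1" and p2: "dpath A Q2"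
    and s1: "set Q1 \<subseteq> V" and s2: "set Q2 \<subseteq> V"
    and h: "hd Q1 = hd Q2" and l: "last Q1 = last Q2"
    and len1: "k1 < length Q1" and len2: "k2 < length Q2"
    and k1: "2 \<le> k1" and k2: "2 \<le> k2"
    and dis1: "inner Q1 \<inter> set Q2 = {}" and dis2: "set Q1 \<inter> inner Q2 = {}"
  shows "contains_subdivision V A (two_blocks_V k1 k2) (two_blocks_A k1 k2)"
proof (rule two_paths_subdiv[OF p1 p2 s1 s2 h l len1 len2 k1 k2])
  fix i j assume "0 < i" "i < length Q1 - 1" "j < length Q2"
  then show "Q1 ! i \<noteq> Q2 ! j" using nth_inner[of i Q1] dis1 by (metis disjoint_iff nth_mem)
next
  fix i j assume "i < length Q1" "0 < j" "j < length Q2 - 1"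
  then show "Q1 ! i \<noteq> Q2 ! j" using nth_inner[of j Q2] dis2 by (metis disjoint_iff nth_mem)
qed

lemma idx_subdiv:
  fixes ps Q1 Q2 :: "'a list" and k1 k2 :: nat
  assumes ps: "distinct ps" "set ps \<subseteq> V"
    and p1: "dpath A Q1" and p2: "dpath A Q2"
    and h: "hd Q1 = hd Q2" and l: "last Q1 = last Q2"
    and len1: "k1 < length Q1" and len2: "k2 < length Q2"
    and k1: "2 \<le> k1" and k2: "2 \<le> k2"
    and S1: "set Q1 = nth ps ` S1" and S2: "set Q2 = nth ps ` S2"
    and T1: "inner Q1 = nth ps ` T1" and T2: "inner Q2 = nth ps ` T2"
    and bnd: "S1 \<union> S2 \<union> T1 \<union> T2 \<subseteq> {..<length ps}"
    and d1: "T1 \<inter> S2 = {}" and d2: "S1 \<inter> T2 = {}"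
  shows "contains_subdivision V A (two_blocks_V k1 k2) (two_blocks_A k1 k2)"
proof (rule two_paths_subdiv'[OF p1 p2 _ _ h l len1 len2 k1 k2])
  have inj: "inj_on (nth ps) {..<length ps}" using ps(1) by (simp add: inj_on_nth)
  show "set Q1 \<subseteq> V" "set Q2 \<subseteq> V" using S1 S2 bnd ps(2) by (auto intro!: nth_mem[THEN subsetD[rotated]])
  show "inner Q1 \<inter> set Q2 = {}" unfolding T1 S2
    using inj d1 bnd by (metis (no_types, lifting) image_empty inj_on_image_Int le_sup_iff)
  show "set Q1 \<inter> inner Q2 = {}" unfolding S1 T2
    using inj d2 bnd by (metis (no_types, lifting) image_empty inj_on_image_Int le_sup_iff)
qed

lemma dpath_append:
  assumes "dpath A xs" "dpath A ys" "(last xs, hd ys) \<in> A" "set xs \<inter> set ys = {}"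
  shows "dpath A (xs @ ys)"
proof -
  have "((xs @ ys) ! t, (xs @ ys) ! Suc t) \<in> A" if "Suc t < length (xs @ ys)" for t
  proof -
    consider "Suc t < length xs" | "Suc t = length xs" | "length xs \<le> t" by linarith
    then show ?thesis
    proof cases
      case 1 then show ?thesis using assms(1) by (simp add: nth_append dpath_def)
    next
      case 2
      then have "xs \<noteq> []" by auto
      then have "xs ! t = last xs" using last_conv_nth[of xs] 2 by (metis diff_Suc_1)
      moreover have "ys ! 0 = hd ys" using that 2 by (simp add: hd_conv_nth)
      ultimately show ?thesis using 2 assms(3) by (simp add: nth_append)
    next
      case 3
      then have "(ys ! (t - length xs), ys ! Suc (t - length xs)) \<in> A"
        using assms(2) that by (simp add: dpath_def)
      then show ?thesis using 3 by (simp add: nth_append Suc_diff_le)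
    qed
  qed
  then show ?thesis using assms by (auto simp: dpath_def)
qed

lemma dpath_single: "dpath A [x]" by (simp add: dpath_def)

lemma inner_cons_snoc: "inner (x # ys @ [z]) = set ys" by (simp add: inner_def)
lemma inner_snoc: "ys \<noteq> [] \<Longrightarrow> inner (ys @ [z]) = set (tl ys)"
  by (cases ys) (auto simp: inner_def)
lemma inner_cons: "inner (x # ys) = set (butlast ys)"
  by (simp add: inner_def)

lemma seg_tl_set: "set (tl (seg Q i j)) = nth Q ` {i<..j}"
proof -
  have "tl (seg Q i j) = map (nth Q) [Suc i..<Suc j]" unfolding seg_def by (simp add: map_tl[symmetric] tl_upt del: upt_Suc)
  then show ?thesis by auto
qed



lemma seg_butlast_set: "set (butlast (seg Q i j)) = nth Q ` {i..<j}"
proof -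
  have "butlast (seg Q i j) = map (nth Q) [i..<j]" unfolding seg_def
    by (cases "i \<le> j") (simp_all add: map_butlast[symmetric])
  then show ?thesis by auto
qed

lemma seg_ne: "i \<le> j \<Longrightarrow> seg Q i j \<noteq> []" by (simp add: seg_def)

lemma img_disj: assumes "distinct ps" "X \<subseteq> {..<length ps}" "Y \<subseteq> {..<length ps}" "X \<inter> Y = {}"
  shows "nth ps ` X \<inter> nth ps ` Y = {}"
proof -
  have "inj_on (nth ps) {..<length ps}" using assms(1) by (simp add: inj_on_nth)
  then show ?thesis using assms by (metis (no_types, lifting) image_empty inj_on_image_Int)
qed

locale hp =
  fixes V :: "'a set" and A ps k1 k2 a b c d
  assumes ps: "dpath A ps" "set ps \<subseteq> V"
    and ord: "a < b" "b < c" "c < d" "d < length ps"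
    and gaps: "k1 \<le> b - a" "k1 \<le> d - c" "k2 \<le> k1" "2 \<le> k2"
begin

lemma dps: "distinct ps" using ps by (simp add: dpath_def)

lemma sd: "dpath A (seg ps a b)" "dpath A (seg ps c d)"
  using seg_dpath[OF ps(1)] ord by auto

lemma FF: assumes "(ps!a, ps!c) \<in> A" "(ps!b, ps!d) \<in> A"
  shows "contains_subdivision V A (two_blocks_V k1 k2) (two_blocks_A k1 k2)"
proof (rule idx_subdiv[OF dps ps(2)])
  let ?Q1 = "seg ps a b @ [ps!d]" and ?Q2 = "[ps!a] @ seg ps c d"
  show "dpath A ?Q1"
    apply (rule dpath_append[OF sd(1) dpath_single])
    using assms ord dps by (auto simp: seg_last seg_set nth_eq_iff_index_eq)
  show "dpath A ?Q2"
    apply (rule dpath_append[OF dpath_single sd(2)])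
    using assms ord dps by (auto simp: seg_hd seg_set nth_eq_iff_index_eq)
  show "hd ?Q1 = hd ?Q2" "last ?Q1 = last ?Q2" using ord by (auto simp: seg_hd seg_last seg_ne hd_append)
  show "k1 < length ?Q1" "k2 < length ?Q2" using ord gaps by (auto simp: seg_len)
  show "2 \<le> k1" "2 \<le> k2" using gaps by auto
  show "set ?Q1 = nth ps ` ({a..b} \<union> {d})" by (auto simp: seg_set)
  show "set ?Q2 = nth ps ` ({a} \<union> {c..d})" by (auto simp: seg_set)
  show "inner ?Q1 = nth ps ` {a<..b}" using ord by (simp add: inner_snoc seg_tl_set seg_ne)
  show "inner ?Q2 = nth ps ` {c..<d}" by (simp add: inner_cons seg_butlast_set)
  show "({a..b} \<union> {d}) \<union> ({a} \<union> {c..d}) \<union> {a<..b} \<union> {c..<d} \<subseteq> {..<length ps}" using ord by auto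
  show "{a<..b} \<inter> ({a} \<union> {c..d}) = {}" "({a..b} \<union> {d}) \<inter> {c..<d} = {}" using ord by auto
qed

lemma BB: assumes "(ps!c, ps!a) \<in> A" "(ps!d, ps!b) \<in> A"
  shows "contains_subdivision V A (two_blocks_V k1 k2) (two_blocks_A k1 k2)"
proof (rule idx_subdiv[OF dps ps(2)])
  let ?Q1 = "[ps!c] @ seg ps a b" and ?Q2 = "seg ps c d @ [ps!b]"
  show "dpath A ?Q1"
    apply (rule dpath_append[OF dpath_single sd(1)])
    using assms ord dps by (auto simp: seg_hd seg_set nth_eq_iff_index_eq)
  show "dpath A ?Q2"
    apply (rule dpath_append[OF sd(2) dpath_single])
    using assms ord dps by (auto simp: seg_last seg_set nth_eq_iff_index_eq)
  show "hd ?Q1 = hd ?Q2" "last ?Q1 = last ?Q2" using ord by (auto simp: seg_hd seg_last seg_ne hd_append)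
  show "k1 < length ?Q1" "k2 < length ?Q2" using ord gaps by (auto simp: seg_len)
  show "2 \<le> k1" "2 \<le> k2" using gaps by auto
  show "set ?Q1 = nth ps ` ({c} \<union> {a..b})" by (auto simp: seg_set)
  show "set ?Q2 = nth ps ` ({c..d} \<union> {b})" by (auto simp: seg_set)
  show "inner ?Q1 = nth ps ` {a..<b}" by (simp add: inner_cons seg_butlast_set)
  show "inner ?Q2 = nth ps ` {c<..d}" using ord by (simp add: inner_snoc seg_tl_set seg_ne)
  show "({c} \<union> {a..b}) \<union> ({c..d} \<union> {b}) \<union> {a..<b} \<union> {c<..d} \<subseteq> {..<length ps}" using ord by auto
  show "{a..<b} \<inter> ({c..d} \<union> {b}) = {}" "({c} \<union> {a..b}) \<inter> {c<..d} = {}" using ord by auto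
qed

lemma FB: assumes "(ps!a, ps!c) \<in> A" "(ps!d, ps!b) \<in> A"
  shows "contains_subdivision V A (two_blocks_V k1 k2) (two_blocks_A k1 k2)"
proof (rule idx_subdiv[OF dps ps(2)])
  let ?Q1 = "[ps!a] @ (seg ps c d @ [ps!b])" and ?Q2 = "seg ps a b"
  have "dpath A (seg ps c d @ [ps!b])"
    apply (rule dpath_append[OF sd(2) dpath_single])
    using assms ord dps by (auto simp: seg_last seg_set nth_eq_iff_index_eq)
  then show "dpath A ?Q1"
    apply (rule dpath_append[OF dpath_single])
    using assms ord dps by (auto simp: seg_hd seg_set seg_ne hd_append nth_eq_iff_index_eq)
  show "dpath A ?Q2" by (rule sd(1))
  show "hd ?Q1 = hd ?Q2" "last ?Q1 = last ?Q2" using ord by (auto simp: seg_hd seg_last seg_ne hd_append)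
  show "k1 < length ?Q1" "k2 < length ?Q2" using ord gaps by (auto simp: seg_len)
  show "2 \<le> k1" "2 \<le> k2" using gaps by auto
  show "set ?Q1 = nth ps ` ({a} \<union> {c..d} \<union> {b})" by (auto simp: seg_set)
  show "set ?Q2 = nth ps ` {a..b}" by (auto simp: seg_set)
  show "inner ?Q1 = nth ps ` {c..d}" by (simp add: inner_cons_snoc seg_set)
  show "inner ?Q2 = nth ps ` {a<..<b}" using ord by (simp add: seg_inner)
  show "({a} \<union> {c..d} \<union> {b}) \<union> {a..b} \<union> {c..d} \<union> {a<..<b} \<subseteq> {..<length ps}" using ord by auto
  show "{c..d} \<inter> {a..b} = {}" "({a} \<union> {c..d} \<union> {b}) \<inter> {a<..<b} = {}" using ord by auto
qed

lemma BF: assumes "(ps!c, ps!a) \<in> A" "(ps!b, ps!d) \<in> A"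
  shows "contains_subdivision V A (two_blocks_V k1 k2) (two_blocks_A k1 k2)"
proof (rule idx_subdiv[OF dps ps(2)])
  let ?Q1 = "[ps!c] @ (seg ps a b @ [ps!d])" and ?Q2 = "seg ps c d"
  have "dpath A (seg ps a b @ [ps!d])"
    apply (rule dpath_append[OF sd(1) dpath_single])
    using assms ord dps by (auto simp: seg_last seg_set nth_eq_iff_index_eq)
  then show "dpath A ?Q1"
    apply (rule dpath_append[OF dpath_single])
    using assms ord dps by (auto simp: seg_hd seg_set seg_ne hd_append nth_eq_iff_index_eq)
  show "dpath A ?Q2" by (rule sd(2))
  show "hd ?Q1 = hd ?Q2" "last ?Q1 = last ?Q2" using ord by (auto simp: seg_hd seg_last seg_ne hd_append)
  show "k1 < length ?Q1" "k2 < length ?Q2" using ord gaps by (auto simp: seg_len)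
  show "2 \<le> k1" "2 \<le> k2" using gaps by auto
  show "set ?Q1 = nth ps ` ({c} \<union> {a..b} \<union> {d})" by (auto simp: seg_set)
  show "set ?Q2 = nth ps ` {c..d}" by (auto simp: seg_set)
  show "inner ?Q1 = nth ps ` {a..b}" by (simp add: inner_cons_snoc seg_set)
  show "inner ?Q2 = nth ps ` {c<..<d}" using ord by (simp add: seg_inner)
  show "({c} \<union> {a..b} \<union> {d}) \<union> {c..d} \<union> {a..b} \<union> {c<..<d} \<subseteq> {..<length ps}" using ord by auto
  show "{a..b} \<inter> {c..d} = {}" "({c} \<union> {a..b} \<union> {d}) \<inter> {c<..<d} = {}" using ord by auto
qed

lemma cross:
  assumes "(ps!a, ps!c) \<in> A \<or> (ps!c, ps!a) \<in> A" "(ps!b, ps!d) \<in> A \<or> (ps!d, ps!b) \<in> A"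
  shows "contains_subdivision V A (two_blocks_V k1 k2) (two_blocks_A k1 k2)"
  using assms FF BB FB BF by blast

end



lemma noncross_deg2:
  fixes S :: "nat set" and G :: "nat \<Rightarrow> nat \<Rightarrow> bool"
  assumes fin: "finite S" and ne: "S \<noteq> {}" and sym: "\<And>x y. G x y \<Longrightarrow> G y x" and irr: "\<And>x. \<not> G x x"
    and nc: "\<And>a b c d. a \<in> S \<Longrightarrow> b \<in> S \<Longrightarrow> c \<in> S \<Longrightarrow> d \<in> S \<Longrightarrow> a < b \<Longrightarrow> b < c \<Longrightarrow> c < d
       \<Longrightarrow> G a c \<Longrightarrow> G b d \<Longrightarrow> False"
  shows "\<exists>v\<in>S. \<exists>p q. \<forall>u\<in>S. G v u \<longrightarrow> u = p \<or> u = q"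
proof -
  define chord where "chord e \<longleftrightarrow> fst e \<in> S \<and> snd e \<in> S \<and> fst e < snd e \<and> G (fst e) (snd e)
      \<and> (\<exists>c\<in>S. fst e < c \<and> c < snd e)" for e
  show ?thesis
  proof (cases "\<exists>e. chord e")
    case False
    define v where "v = Min S"
    have v: "v \<in> S" "\<And>x. x \<in> S \<Longrightarrow> v \<le> x" using fin ne by (auto simp: v_def)
    define p where "p = Min {u \<in> S. v < u}"
    have "u = p" if "u \<in> S" "G v u" for u
    proof -
      have "v < u" using v that irr by (metis order_le_less)
      then have ne': "{u \<in> S. v < u} \<noteq> {}" using that by auto
      have p: "p \<in> S" "v < p" "p \<le> u" using Min_in[OF _ ne'] Min_le[of "{u \<in> S. v < u}" u] fin that \<open>v < u\<close>
        by (auto simp: p_def)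
      show ?thesis
      proof (rule ccontr)
        assume "u \<noteq> p"
        then have "chord (v, u)" using p that v \<open>v < u\<close> by (auto simp: chord_def)
        then show False using False by blast
      qed
    qed
    then show ?thesis using v by blast
  next
    case True
    then obtain e0 where "chord e0" by blast
    from ex_has_least_nat[of chord e0 "\<lambda>e. snd e - fst e", OF this]
    obtain e where e: "chord e" "\<And>e'. chord e' \<Longrightarrow> snd e - fst e \<le> snd e' - fst e'"
      by blast
    obtain a b where ab: "e = (a, b)" by (cases e)
    have abS: "a \<in> S" "b \<in> S" "a < b" "G a b" and ex: "\<exists>c\<in>S. a < c \<and> c < b"
      using e(1) ab by (auto simp: chord_def)
    have mini: "b - a \<le> y - x" if "chord (x, y)" for x y using e(2)[OF that] ab by simp
    define M where "M = {x \<in> S. a < x \<and> x < b}"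
    have Mne: "M \<noteq> {}" and Mfin: "finite M" using ex fin by (auto simp: M_def)
    define c where "c = Min M"
    have c: "c \<in> S" "a < c" "c < b" using Min_in[OF Mfin Mne] by (auto simp: c_def M_def)
    have cmin: "c \<le> x" if "x \<in> S" "a < x" "x < b" for x
      using Min_le[OF Mfin] that by (auto simp: c_def M_def)
    define N where "N = {x \<in> S. c < x}"
    have Nne: "N \<noteq> {}" and Nfin: "finite N" using c abS fin by (auto simp: N_def)
    define q where "q = Min N"
    have q: "q \<in> S" "c < q" using Min_in[OF Nfin Nne] by (auto simp: q_def N_def)
    have qmin: "q \<le> x" if "x \<in> S" "c < x" for x
      using Min_le[OF Nfin] that by (auto simp: q_def N_def)
    have "u = a \<or> u = q" if u: "u \<in> S" "G c u" for u
    proof -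
      have "u \<noteq> c" using irr u by auto
      consider "u < a" | "u = a" | "a < u" "u < c" | "c < u" using \<open>u \<noteq> c\<close> by linarith
      then show ?thesis
      proof cases
        case 1
        have "G u c" using sym u(2) .
        from nc[OF u(1) abS(1) c(1) abS(2) 1 c(2) c(3) this abS(4)] show ?thesis ..
      next
        case 2 then show ?thesis by simp
      next
        case 3 then show ?thesis using cmin[of u] u c by simp
      next
        case 4
        have "q \<le> u" using qmin u 4 by simp
        show ?thesis
        proof (rule ccontr)
          assume "\<not> (u = a \<or> u = q)"
          then have "q < u" using \<open>q \<le> u\<close> by simp
          show False
          proof (cases "b < u")
            case True
            from nc[OF abS(1) c(1) abS(2) u(1) c(2) c(3) True abS(4) u(2)] show False .
          next
            case False
            then have "chord (c, u)" using u q c 4 \<open>q < u\<close> by (auto simp: chord_def)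
            then have "b - a \<le> u - c" by (rule mini)
            then show False using False c by linarith
          qed
        qed
      qed
    qed
    then show ?thesis using c by blast
  qed
qed

definition NC :: "(nat \<Rightarrow> nat \<Rightarrow> bool) \<Rightarrow> nat set \<Rightarrow> bool" where
  "NC G S \<longleftrightarrow> (\<forall>a b c d. a \<in> S \<longrightarrow> b \<in> S \<longrightarrow> c \<in> S \<longrightarrow> d \<in> S \<longrightarrow> a < b \<longrightarrow> b < c \<longrightarrow> c < d
       \<longrightarrow> G a c \<longrightarrow> G b d \<longrightarrow> False)"

lemma NC_mono: "NC G S \<Longrightarrow> T \<subseteq> S \<Longrightarrow> NC G T"
  unfolding NC_def by blast

lemma noncross_col:
  fixes G :: "nat \<Rightarrow> nat \<Rightarrow> bool"
  assumes Gsym: "\<And>x y. G x y \<Longrightarrow> G y x" and Girr: "\<And>x. \<not> G x x"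
  shows "finite S \<Longrightarrow> NC G S
    \<Longrightarrow> \<exists>h. (\<forall>x\<in>S. h x < (3::nat)) \<and> (\<forall>x\<in>S. \<forall>y\<in>S. G x y \<longrightarrow> h x \<noteq> h y)"
proof (induction "card S" arbitrary: S rule: less_induct)
  case less
  show ?case
  proof (cases "S = {}")
    case True then show ?thesis by simp
  next
    case False
    have nc: "False" if "a \<in> S" "b \<in> S" "c \<in> S" "d \<in> S" "a < b" "b < c" "c < d" "G a c" "G b d" for a b c d
      using less.prems(2) that unfolding NC_def by blast
    obtain v p q where v: "v \<in> S" and pq: "\<And>u. u \<in> S \<Longrightarrow> G v u \<Longrightarrow> u = p \<or> u = q"
    proof -
      have "\<exists>v\<in>S. \<exists>p q. \<forall>u\<in>S. G v u \<longrightarrow> u = p \<or> u = q"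
        apply (rule noncross_deg2[of S G])
            apply (rule less.prems(1))
           apply (rule False)
          apply (erule Gsym)
         apply (rule Girr)
        subgoal for a b c d by (rule nc[of a b c d]) assumption+
        done
      then show ?thesis using that by blast
    qed
    let ?S = "S - {v}"
    have c1: "card ?S < card S" using v less.prems(1) card_gt_0_iff by (metis card_Diff1_less)
    have c2: "finite ?S" using less.prems(1) by simp
    have c3: "NC G ?S" using NC_mono[OF less.prems(2)] by blast
    obtain h :: "nat \<Rightarrow> nat" where h: "\<forall>x\<in>?S. h x < 3" "\<forall>x\<in>?S. \<forall>y\<in>?S. G x y \<longrightarrow> h x \<noteq> h y"
      using less.hyps[OF c1 c2 c3] by blast
    obtain col :: nat where col: "col < 3" "col \<noteq> h p" "col \<noteq> h q"
    proof -
      have "\<exists>col::nat. col < 3 \<and> col \<noteq> h p \<and> col \<noteq> h q"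
      proof (cases "h p \<noteq> 0 \<and> h q \<noteq> 0")
        case True then show ?thesis by (intro exI[of _ 0]) auto
      next
        case False
        then show ?thesis
        proof (cases "h p \<noteq> 1 \<and> h q \<noteq> 1")
          case True then show ?thesis by (intro exI[of _ 1]) auto
        next
          case False
          then show ?thesis using \<open>\<not> (h p \<noteq> 0 \<and> h q \<noteq> 0)\<close> by (intro exI[of _ 2]) auto
        qed
      qed
      then show ?thesis using that by blast
    qed
    define h' where "h' = h(v := col)"
    have "\<forall>x\<in>S. h' x < 3" using h col by (auto simp: h'_def)
    moreover have "h' x \<noteq> h' y" if "x \<in> S" "y \<in> S" "G x y" for x y
    proof (cases "x = v \<or> y = v")
      case True
      then show ?thesis
      proof
        assume "x = v"
        then have "y \<noteq> v" using Girr that by auto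
        moreover have "y = p \<or> y = q" using pq that \<open>x = v\<close> by auto
        ultimately show ?thesis using col \<open>x = v\<close> by (auto simp: h'_def)
      next
        assume "y = v"
        then have "x \<noteq> v" using Girr that by auto
        moreover have "x = p \<or> x = q" using pq that \<open>y = v\<close> Gsym by auto
        ultimately show ?thesis using col \<open>y = v\<close> by (auto simp: h'_def)
      qed
    next
      case False
      then show ?thesis using h that by (auto simp: h'_def)
    qed
    ultimately show ?thesis by blast
  qed
qed




lemma mod_gap: fixes a b k :: nat assumes "a < b" "a mod k = b mod k" "0 < k" shows "k \<le> b - a"
proof -
  have "k dvd b - a" using assms by (metis mod_eq_dvd_iff_nat less_imp_le)
  then show ?thesis using assms(1) by (simp add: dvd_imp_le)
qed

lemma col_arith: fixes r r' x y :: nat assumes "x < 3" "y < 3" "3 * r + x = 3 * r' + y" shows "r = r'"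
  using assms by presburger

theorem theorem7:
  fixes V :: "'a set" and A :: "('a \<times> 'a) set" and k1 k2 :: nat
  assumes "digraph V A"
    and "k1 \<ge> k2" and "k2 \<ge> 2"
    and "\<exists>ps. hamiltonian_dpath V A ps"
    and "\<not> contains_subdivision V A (two_blocks_V k1 k2) (two_blocks_A k1 k2)"
  shows "chromatic_number V A \<le> 3 * k1"
proof -
  obtain ps where hp: "dpath A ps" "set ps = V" using assms(4) by (auto simp: hamiltonian_dpath_def)
  have dps: "distinct ps" using hp by (simp add: dpath_def)
  have AV: "A \<subseteq> V \<times> V" and noloop: "\<And>v. (v, v) \<notin> A" using assms(1) by (auto simp: digraph_def)
  define n where "n = length ps"
  have k1pos: "0 < k1" using assms(2,3) by simp
  define G where "G i j \<longleftrightarrow> (ps ! i, ps ! j) \<in> A \<or> (ps ! j, ps ! i) \<in> A" for i j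
  have Gsym: "G x y \<Longrightarrow> G y x" for x y by (auto simp: G_def)
  have Girr: "\<not> G x x" for x using noloop by (auto simp: G_def)
  have ex: "\<exists>h. (\<forall>x\<in>{i. i < n \<and> i mod k1 = r}. h x < (3::nat)) \<and>
      (\<forall>x\<in>{i. i < n \<and> i mod k1 = r}. \<forall>y\<in>{i. i < n \<and> i mod k1 = r}. G x y \<longrightarrow> h x \<noteq> h y)" for r
  proof (rule noncross_col[of G, OF Gsym Girr])
    show "finite {i. i < n \<and> i mod k1 = r}" by simp
    show "NC G {i. i < n \<and> i mod k1 = r}" unfolding NC_def
    proof (intro allI impI)
      fix a b c d assume as: "a \<in> {i. i < n \<and> i mod k1 = r}" "b \<in> {i. i < n \<and> i mod k1 = r}"
        "c \<in> {i. i < n \<and> i mod k1 = r}" "d \<in> {i. i < n \<and> i mod k1 = r}" "a < b" "b < c" "c < d" "G a c" "G b d"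
      have g1: "k1 \<le> b - a" using mod_gap[of a b k1] as k1pos by simp
      have g2: "k1 \<le> d - c" using mod_gap[of c d k1] as k1pos by simp
      interpret hp V A ps k1 k2 a b c d
        using hp as g1 g2 assms(2,3) n_def by unfold_locales auto
      have "contains_subdivision V A (two_blocks_V k1 k2) (two_blocks_A k1 k2)"
        using cross as(8,9) unfolding G_def by blast
      then show False using assms(5) by blast
    qed
  qed
  have "\<forall>r. \<exists>h. (\<forall>x\<in>{i. i < n \<and> i mod k1 = r}. h x < (3::nat)) \<and>
      (\<forall>x\<in>{i. i < n \<and> i mod k1 = r}. \<forall>y\<in>{i. i < n \<and> i mod k1 = r}. G x y \<longrightarrow> h x \<noteq> h y)"
    using ex by blast
  from choice[OF this] obtain H where H0: "\<forall>r. (\<forall>x\<in>{i. i < n \<and> i mod k1 = r}. H r x < (3::nat)) \<and>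
      (\<forall>x\<in>{i. i < n \<and> i mod k1 = r}. \<forall>y\<in>{i. i < n \<and> i mod k1 = r}. G x y \<longrightarrow> H r x \<noteq> H r y)" ..
  have H: "(\<forall>x\<in>{i. i < n \<and> i mod k1 = r}. H r x < (3::nat)) \<and>
      (\<forall>x\<in>{i. i < n \<and> i mod k1 = r}. \<forall>y\<in>{i. i < n \<and> i mod k1 = r}. G x y \<longrightarrow> H r x \<noteq> H r y)" for r
    using H0 by blast
  define pos where "pos v = (THE i. i < n \<and> ps ! i = v)" for v
  have pos: "pos v < n \<and> ps ! pos v = v" if "v \<in> V" for v
  proof -
    have "\<exists>!i. i < n \<and> ps ! i = v"
      using that hp(2) dps n_def by (auto simp: in_set_conv_nth nth_eq_iff_index_eq)
    then show ?thesis unfolding pos_def by (rule theI')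
  qed
  define col where "col v = 3 * (pos v mod k1) + H (pos v mod k1) (pos v)" for v
  have "proper_colouring V A (3 * k1) col"
    unfolding proper_colouring_def
  proof (intro conjI subsetI ballI)
    fix x assume "x \<in> col ` V"
    then obtain v where v: "v \<in> V" "x = col v" by auto
    have "H (pos v mod k1) (pos v) < 3" using H pos[OF v(1)] by blast
    moreover have "pos v mod k1 < k1" using k1pos by simp
    ultimately show "x \<in> {..<3 * k1}" unfolding v(2) col_def by simp
  next
    fix e assume "e \<in> A"
    then obtain u v where e: "e = (u, v)" "(u, v) \<in> A" by (cases e) auto
    then have uv: "u \<in> V" "v \<in> V" using AV by auto
    have "col u \<noteq> col v"
    proof (cases "pos u mod k1 = pos v mod k1")
      case True
      have "G (pos u) (pos v)" using pos uv e(2) by (simp add: G_def)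
      then have "H (pos u mod k1) (pos u) \<noteq> H (pos u mod k1) (pos v)"
        using H[of "pos u mod k1"] pos[OF uv(1)] pos[OF uv(2)] True by auto
      then show ?thesis using True by (simp add: col_def)
    next
      case False
      have "H (pos u mod k1) (pos u) < 3" "H (pos v mod k1) (pos v) < 3"
        using H pos[OF uv(1)] pos[OF uv(2)] by blast+
      then show ?thesis using False col_arith unfolding col_def by metis
    qed
    then show "case e of (u, v) \<Rightarrow> col u \<noteq> col v" using e by simp
  qed
  then have "\<exists>c. proper_colouring V A (3 * k1) c" by blast
  then show ?thesis unfolding chromatic_number_def by (rule Least_le)
qed


end
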